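(* Let $X$ and $Y$ be non-negative random variables with absolutely continuous distribution functions $F$ and $G$ (survival functions $\bar F=1-F$, $\bar G=1-G$), and let $\alpha,\beta>0$. Define $$R_{\alpha,\beta}(\bar F,\bar G,t)=\int_t^\infty\left(\frac{\bar F(x)}{\bar F(t)}\right)^{\alpha}\left(\frac{\bar G(x)}{\bar G(t)}\right)^{\beta}dx,\quad t\ge0.$$ If $R_{\alpha,\beta}(\bar F,\bar G,t)=c$ for all $t\ge 0$, where $c$ is a positive constant, then $F$ is an exponential distribution if and only if $G$ is an exponential distribution.
   Context: $R_{\alpha,\beta}(\bar F,\bar G,t)$ is the dynamic relative cumulative residual information measure between the residual lives $(X-t\mid X>t)$ and $(Y-t\mid Y>t)$. *)

theory Defs
  imports "HOL-Probability.Probability"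
begin

definition surv :: "real measure \<Rightarrow> real \<Rightarrow> real" where
  "surv M x = 1 - cdf M x"

definition R_ab :: "real \<Rightarrow> real \<Rightarrow> real measure \<Rightarrow> real measure \<Rightarrow> real \<Rightarrow> real" where
  "R_ab \<alpha> \<beta> M N t =
     (LBINT x:{t..}. (surv M x / surv M t) powr \<alpha> * (surv N x / surv N t) powr \<beta>)"

definition is_exponential :: "real measure \<Rightarrow> bool" where
  "is_exponential M \<longleftrightarrow>
     (\<exists>l>0. \<forall>x. cdf M x = (if x < 0 then 0 else 1 - exp (- l * x)))"

end

theory Submission imports Defs begin

lemma cdf0:
  assumes "real_distribution M" "measure M {..<0} = 0" "absolutely_continuous lborel M"
  shows "cdf M 0 = 0" and "\<And>x. x < 0 \<Longrightarrow> cdf M x = 0"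
proof -
  interpret real_distribution M by fact
  have "{0::real} \<in> null_sets lborel" by (rule countable_imp_null_set_lborel) simp
  hence "{0::real} \<in> null_sets M" using assms(3) unfolding absolutely_continuous_def by blast
  hence m0: "measure M {0} = 0" by (simp add: measure_eq_0_null_sets)
  have "{..0::real} = {..<0} \<union> {0}" by auto
  hence "cdf M 0 = measure M {..<0}"
    unfolding cdf_def using \<open>{0::real} \<in> null_sets M\<close> by (metis measure_Un_null_set events_eq_borel lessThan_borel)
  thus "cdf M 0 = 0" using assms(2) by simp
  fix x :: real assume "x < 0"
  hence "cdf M x \<le> measure M {..<0}" unfolding cdf_def
    by (intro finite_measure_mono) auto
  thus "cdf M x = 0" using assms(2) cdf_nonneg by (metis order_antisym)
qed

lemma key:
  fixes M N :: "real measure" and \<alpha> \<beta> c :: real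
  assumes "real_distribution M" and "real_distribution N"
    and "measure M {..<0} = 0" and "measure N {..<0} = 0"
    and "absolutely_continuous lborel M" and "absolutely_continuous lborel N"
    and "\<alpha> > 0" and "\<beta> > 0" and "c > 0"
    and R: "\<forall>t\<ge>0. R_ab \<alpha> \<beta> M N t = c"
  shows "\<forall>x\<ge>0. surv M x > 0 \<and> surv N x > 0 \<and> surv M x powr \<alpha> * surv N x powr \<beta> = exp (- x / c)"
proof -
  interpret M: real_distribution M by fact
  interpret N: real_distribution N by fact
  have snn: "\<And>x. 0 \<le> surv M x" "\<And>x. 0 \<le> surv N x"
    using M.cdf_bounded_prob N.cdf_bounded_prob by (simp_all add: surv_def)
  have pos: "surv M t > 0 \<and> surv N t > 0" if "t \<ge> 0" for t
  proof (rule ccontr)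
    assume "\<not> (surv M t > 0 \<and> surv N t > 0)"
    then have "surv M t = 0 \<or> surv N t = 0" using snn[of t] by linarith
    then have "R_ab \<alpha> \<beta> M N t = 0" unfolding R_ab_def using assms(7,8) by auto
    with R that assms(9) show False by auto
  qed
  define f where "f x = surv M x powr \<alpha> * surv N x powr \<beta>" for x
  have fpos: "f t > 0" if "t \<ge> 0" for t using pos[OF that] unfolding f_def by simp
  have feq: "(LBINT x:{t..}. f x) = c * f t" if "t \<ge> 0" for t
  proof -
    have "R_ab \<alpha> \<beta> M N t = (LBINT x:{t..}. f x / f t)"
      unfolding R_ab_def f_def by (simp add: powr_divide snn)
    also have "\<dots> = (LBINT x:{t..}. f x) / f t" by simp
    finally show ?thesis using R that fpos[OF that] by (simp add: field_simps)
  qed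
  have fint: "set_integrable lborel {t..} f" if "t \<ge> 0" for t
  proof (rule ccontr)
    assume "\<not> set_integrable lborel {t..} f"
    then have "(LBINT x:{t..}. f x) = 0"
      unfolding set_integrable_def set_lebesgue_integral_def by (simp add: not_integrable_integral_eq)
    with feq[OF that] fpos[OF that] assms(9) show False by simp
  qed
  have hk: "(f has_integral c * f t) {t..}" if "t \<ge> 0" for t
    using set_borel_integral_eq_integral[OF fint[OF that]] feq[OF that]
    by (metis has_integral_integral)
  have f0: "f 0 = 1"
    using cdf0(1)[OF assms(1,3,5)] cdf0(1)[OF assms(2,4,6)] unfolding f_def surv_def by simp
  have io: "f integrable_on {0..s}" for s
    by (rule integrable_on_subinterval[OF set_borel_integral_eq_integral(1)[OF fint[of 0]]]) auto
  have split: "f s = 1 - integral {0..s} f / c" if "s \<ge> 0" for s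
  proof -
    have "(f has_integral (integral {0..s} f + c * f s)) ({0..s} \<union> {s..})"
      by (rule has_integral_Un) (use io hk that in \<open>auto simp: Int_atLeastAtMost\<close>)
    moreover have "{0..s} \<union> {s..} = {0::real..}" using that by auto
    ultimately have "integral {0..s} f + c * f s = c * f 0"
      using hk[of 0] has_integral_unique by auto
    then show ?thesis using f0 assms(9) by (simp add: field_simps)
  qed
  define g where "g s = 1 - integral {0..s} f / c" for s
  have expo: "f s = exp (- s / c)" if "s \<ge> 0" for s
  proof -
    define b where "b = s"
    have cont: "continuous_on {0..b} f"
    proof -
      have "continuous_on {0..b} g" unfolding g_def
        by (intro continuous_intros indefinite_integral_continuous_1 io) (use assms(9) in auto)
      moreover have "\<And>x. x \<in> {0..b} \<Longrightarrow> g x = f x" using split g_def by auto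
      ultimately show ?thesis by (metis continuous_on_cong)
    qed
    have der: "((\<lambda>u. g u * exp (u / c)) has_field_derivative 0) (at x within {0..b})"
      if "x \<in> {0..b}" for x
    proof -
      have "((\<lambda>u. integral {0..u} f) has_field_derivative f x) (at x within {0..b})"
        using integral_has_vector_derivative[OF cont that]
        by (simp add: has_real_derivative_iff_has_vector_derivative)
      then have "(g has_field_derivative (- f x / c)) (at x within {0..b})"
        unfolding g_def using assms(9) by (auto intro!: derivative_eq_intros)
      then have "((\<lambda>u. g u * exp (u / c)) has_field_derivative
          (- f x / c) * exp (x / c) + g x * (exp (x / c) * (1 / c))) (at x within {0..b})" using assms(9)
        by (auto intro!: derivative_eq_intros)
      moreover have "g x = f x" using split that g_def by auto
      ultimately show ?thesis using assms(9) by (simp add: field_simps)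
    qed
    obtain C where C: "\<forall>x\<in>{0..b}. g x * exp (x / c) = C"
      using has_field_derivative_zero_constant[OF convex_real_interval(5) der] by blast
    have "g 0 = 1" unfolding g_def by simp
    then have "C = 1" using C that b_def by force
    then have "g s * exp (s / c) = 1" using C that b_def by auto
    then have "g s = exp (- s / c)" by (simp add: exp_minus field_simps)
    then show ?thesis using split[OF that] g_def by simp
  qed
  show ?thesis using pos expo f_def by auto
qed


lemma transfer:
  fixes P Q :: "real measure" and a b c :: real
  assumes "real_distribution Q" "measure Q {..<0} = 0" "is_exponential P"
    and "a > 0" "b > 0" "c > 0"
    and H: "\<forall>x\<ge>0. surv Q x > 0 \<and> surv P x powr a * surv Q x powr b = exp (- x / c)"
  shows "is_exponential Q"
proof -
  interpret Q: real_distribution Q by fact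
  obtain l where l: "l > 0" "\<forall>x. cdf P x = (if x < 0 then 0 else 1 - exp (- l * x))"
    using assms(3) unfolding is_exponential_def by blast
  define k where "k = (1 / c - a * l) / b"
  have sq: "surv Q x = exp (- k * x)" if "x \<ge> 0" for x
  proof -
    have sp: "surv P x = exp (- l * x)" using l that by (simp add: surv_def)
    have "exp (- l * x * a) * surv Q x powr b = exp (- x / c)"
      using H that sp exp_powr_real[of "- l * x" a] by metis
    then have "surv Q x powr b = exp (- x / c) / exp (- l * x * a)"
      by (simp add: field_simps)
    also have "\<dots> = exp (- x / c + l * x * a)" by (simp add: exp_diff[symmetric])
    finally have e: "surv Q x powr b = exp (- x / c + l * x * a)" .
    have "surv Q x = (surv Q x powr b) powr (1 / b)"
      using H that assms(5) by (simp add: powr_powr less_imp_le)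
    also have "\<dots> = exp ((- x / c + l * x * a) * (1 / b))" by (simp add: e exp_powr_real)
    also have "\<dots> = exp (- k * x)" unfolding k_def using assms(5,6)
      by (simp add: field_simps)
    finally show ?thesis .
  qed
  have kpos: "k > 0"
  proof (rule ccontr)
    assume "\<not> k > 0"
    then have "\<forall>\<^sub>F x in at_top. cdf Q x \<le> 0"
    proof -
      have "cdf Q x \<le> 0" if "x \<ge> 0" for x
      proof -
        have "- k * x \<ge> 0" using \<open>\<not> k > 0\<close> that by (simp add: mult_nonpos_nonneg)
        then have "exp (- k * x) \<ge> 1" by simp
        then show ?thesis using sq[OF that] unfolding surv_def by linarith
      qed
      then show ?thesis using eventually_mono[OF eventually_ge_at_top[of "0::real"]] by auto
    qed
    then have "1 \<le> (0::real)"
      using tendsto_le[OF trivial_limit_at_top_linorder tendsto_const Q.cdf_lim_at_top_prob] by blast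
    then show False by simp
  qed
  have neg: "cdf Q x = 0" if "x < 0" for x
  proof -
    have "cdf Q x \<le> measure Q {..<0}" unfolding cdf_def using that
      by (intro Q.finite_measure_mono) auto
    thus "cdf Q x = 0" using assms(2) Q.cdf_nonneg by (metis order_antisym)
  qed
  show ?thesis unfolding is_exponential_def
  proof (intro exI[of _ k] conjI kpos allI)
    fix x :: real
    show "cdf Q x = (if x < 0 then 0 else 1 - exp (- k * x))"
    proof (cases "x < 0")
      case True then show ?thesis using neg by simp
    next
      case False then have "1 - cdf Q x = exp (- k * x)" using sq[of x] by (simp add: surv_def)
      then show ?thesis using False by simp
    qed
  qed
qed

theorem theorem3p1:
  fixes M N :: "real measure" and \<alpha> \<beta> c :: real
  assumes "real_distribution M" and "real_distribution N"
    and "measure M {..<0} = 0" and "measure N {..<0} = 0"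
    and "absolutely_continuous lborel M" and "absolutely_continuous lborel N"
    and "\<alpha> > 0" and "\<beta> > 0" and "c > 0"
    and "\<forall>t\<ge>0. R_ab \<alpha> \<beta> M N t = c"
  shows "is_exponential M \<longleftrightarrow> is_exponential N"
proof -
  have K: "\<forall>x\<ge>0. surv M x > 0 \<and> surv N x > 0 \<and> surv M x powr \<alpha> * surv N x powr \<beta> = exp (- x / c)"
    by (rule key[OF assms])
  show ?thesis
  proof
    assume "is_exponential M"
    show "is_exponential N"
      by (rule transfer[OF assms(2,4) \<open>is_exponential M\<close> assms(7,8,9)]) (use K in auto)
  next
    assume "is_exponential N"
    show "is_exponential M"
      by (rule transfer[OF assms(1,3) \<open>is_exponential N\<close> assms(8,7,9)]) (use K in \<open>auto simp: mult.commute\<close>)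
  qed
qed

end
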